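(* Let $G$ be a connected graph of order $n\geq 9$ such that $d(u)+d(v)\geq n-2$ for every pair of non-adjacent vertices $u,v\in V(G)$. Then $prc(G)=\chi'(G)$.
   Context: A path in an edge-coloured graph is a rainbow path if its edges receive pairwise distinct colours. The proper rainbow connection number $prc(G)$ of a connected graph is the minimum number of colours in a proper edge-colouring (adjacent edges get distinct colours) such that every two distinct vertices are joined by a rainbow path. $\chi'(G)$ is the chromatic index; $d(u)$ is the degree of $u$. *)

theory Defs
  imports Main
begin

definition simple_graph :: "'a set \<Rightarrow> 'a set set \<Rightarrow> bool" where
  "simple_graph V E \<longleftrightarrow> finite V \<and> (\<forall>e\<in>E. e \<subseteq> V \<and> card e = 2)"

definition degree :: "'a set set \<Rightarrow> 'a \<Rightarrow> nat" where
  "degree E u = card {v. {u, v} \<in> E}"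

definition is_path :: "'a set \<Rightarrow> 'a set set \<Rightarrow> 'a list \<Rightarrow> bool" where
  "is_path V E p \<longleftrightarrow> p \<noteq> [] \<and> distinct p \<and> set p \<subseteq> V \<and>
     (\<forall>i. Suc i < length p \<longrightarrow> {p ! i, p ! Suc i} \<in> E)"

definition path_edges :: "'a list \<Rightarrow> 'a set list" where
  "path_edges p = map (\<lambda>i. {p ! i, p ! Suc i}) [0..<length p - 1]"

definition connected_graph :: "'a set \<Rightarrow> 'a set set \<Rightarrow> bool" where
  "connected_graph V E \<longleftrightarrow> V \<noteq> {} \<and>
     (\<forall>u\<in>V. \<forall>v\<in>V. \<exists>p. is_path V E p \<and> hd p = u \<and> last p = v)"

definition proper_edge_colouring :: "'a set set \<Rightarrow> ('a set \<Rightarrow> nat) \<Rightarrow> nat \<Rightarrow> bool" where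
  "proper_edge_colouring E c k \<longleftrightarrow> (\<forall>e\<in>E. c e < k) \<and>
     (\<forall>e\<in>E. \<forall>f\<in>E. e \<noteq> f \<and> e \<inter> f \<noteq> {} \<longrightarrow> c e \<noteq> c f)"

definition rainbow_path :: "'a set \<Rightarrow> 'a set set \<Rightarrow> ('a set \<Rightarrow> nat) \<Rightarrow> 'a list \<Rightarrow> bool" where
  "rainbow_path V E c p \<longleftrightarrow> is_path V E p \<and> distinct (map c (path_edges p))"

definition rainbow_connected :: "'a set \<Rightarrow> 'a set set \<Rightarrow> ('a set \<Rightarrow> nat) \<Rightarrow> bool" where
  "rainbow_connected V E c \<longleftrightarrow>
     (\<forall>u\<in>V. \<forall>v\<in>V. u \<noteq> v \<longrightarrow> (\<exists>p. rainbow_path V E c p \<and> hd p = u \<and> last p = v))"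

definition chromatic_index :: "'a set \<Rightarrow> 'a set set \<Rightarrow> nat" where
  "chromatic_index V E = (LEAST k. \<exists>c. proper_edge_colouring E c k)"

definition prc :: "'a set \<Rightarrow> 'a set set \<Rightarrow> nat" where
  "prc V E = (LEAST k. \<exists>c. proper_edge_colouring E c k \<and> rainbow_connected V E c)"

end

theory Submission imports Defs begin
lemma is_path_Cons2: "is_path V E (a#b#p) \<longleftrightarrow> a \<notin> set (b#p) \<and> a \<in> V \<and> {a,b} \<in> E \<and> is_path V E (b#p)"
proof -
  have "(\<forall>i. Suc i < length (a#b#p) \<longrightarrow> {(a#b#p)!i, (a#b#p)!Suc i}\<in>E) \<longleftrightarrow>
     {a,b}\<in>E \<and> (\<forall>i. Suc i < length (b#p) \<longrightarrow> {(b#p)!i,(b#p)!Suc i}\<in>E)" (is "?L \<longleftrightarrow> ?R")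
  proof
    assume L: ?L
    have "{a,b}\<in>E" using L[rule_format, of 0] by simp
    moreover have "\<forall>i. Suc i < length (b#p) \<longrightarrow> {(b#p)!i,(b#p)!Suc i}\<in>E"
    proof (intro allI impI)
      fix i assume "Suc i < length (b#p)"
      then show "{(b#p)!i,(b#p)!Suc i}\<in>E" using L[rule_format, of "Suc i"] by simp
    qed
    ultimately show ?R by blast
  next
    assume R: ?R
    show ?L
    proof (intro allI impI)
      fix i assume i: "Suc i < length (a#b#p)"
      show "{(a#b#p)!i, (a#b#p)!Suc i}\<in>E"
      proof (cases i)
        case 0 then show ?thesis using R by simp
      next
        case (Suc j) then show ?thesis using R i by simp
      qed
    qed
  qed
  then show ?thesis unfolding is_path_def by auto
qed
lemma path_edges_Cons2: "path_edges (a#b#p) = {a,b} # path_edges (b#p)"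
  unfolding path_edges_def
  by (simp add: upt_conv_Cons map_Suc_upt[symmetric] del: upt_Suc)
lemma path_edges_single: "path_edges [a] = []"
  unfolding path_edges_def by simp
lemma is_path_single: "is_path V E [a] \<longleftrightarrow> a \<in> V"
  unfolding is_path_def by simp

lemma crossing:
  "is_path V E p \<Longrightarrow> hd p \<in> S \<Longrightarrow> last p \<notin> S \<Longrightarrow> \<exists>a b. a \<in> S \<and> b \<notin> S \<and> {a,b} \<in> E"
proof (induction p)
  case Nil then show ?case by (simp add: is_path_def)
next
  case (Cons a p)
  show ?case
  proof (cases p)
    case Nil then show ?thesis using Cons.prems by simp
  next
    case (Cons b q)
    show ?thesis
    proof (cases "b \<in> S")
      case True
      have "is_path V E p" using Cons.prems(1) \<open>p = b#q\<close> is_path_Cons2 by metis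
      then show ?thesis using Cons.IH Cons.prems True \<open>p = b#q\<close> by simp
    next
      case False
      have "{a,b} \<in> E" using Cons.prems(1) \<open>p = b#q\<close> is_path_Cons2 by metis
      then show ?thesis using Cons.prems(2) False by auto
    qed
  qed
qed

lemma every_proper_rc:
  assumes sg: "simple_graph V E" and cg: "connected_graph V E" and n9: "card V \<ge> 9"
    and dc: "\<forall>u\<in>V. \<forall>v\<in>V. u \<noteq> v \<and> {u, v} \<notin> E \<longrightarrow> degree E u + degree E v \<ge> card V - 2"
    and pc: "proper_edge_colouring E c k"
  shows "rainbow_connected V E c"
  unfolding rainbow_connected_def
proof (intro ballI impI)
  fix u v assume uV: "u \<in> V" and vV: "v \<in> V" and uv: "u \<noteq> v"
  have finV: "finite V" using sg by (simp add: simple_graph_def)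
  have eV: "a \<in> V \<and> b \<in> V \<and> a \<noteq> b" if "{a,b} \<in> E" for a b
  proof -
    have "{a,b} \<subseteq> V \<and> card {a,b} = 2" using sg that unfolding simple_graph_def by blast
    then show ?thesis by (cases "a = b") auto
  qed
  have col: "c e \<noteq> c f" if "e \<in> E" "f \<in> E" "e \<noteq> f" "e \<inter> f \<noteq> {}" for e f
    using pc that by (simp add: proper_edge_colouring_def)
  note rp = rainbow_path_def is_path_Cons2 path_edges_Cons2 is_path_single path_edges_single
  show "\<exists>p. rainbow_path V E c p \<and> hd p = u \<and> last p = v"
  proof (rule ccontr)
    assume nr: "\<not> ?thesis"
    have uvE: "{u,v} \<notin> E"
    proof
      assume "{u,v} \<in> E"
      then have "rainbow_path V E c [u,v]" using uV vV uv by (simp add: rp)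
      then show False using nr by force
    qed
    have nw: False if "{u,w} \<in> E" "{w,v} \<in> E" for w
    proof -
      have "u \<noteq> w" "w \<noteq> v" using eV that by auto
      have "c {u,w} \<noteq> c {w,v}" using col[OF that] uv by (auto simp: doubleton_eq_iff)
      then have "rainbow_path V E c [u,w,v]" using uV vV uv that \<open>u \<noteq> w\<close> \<open>w \<noteq> v\<close> eV
        by (simp add: rp)
      then show False using nr by force
    qed
    define A where "A = {w. {u,w} \<in> E}"
    define B where "B = {w. {v,w} \<in> E}"
    have AV: "A \<subseteq> V" and BV: "B \<subseteq> V" using eV unfolding A_def B_def by auto
    have finA: "finite A" and finB: "finite B" using AV BV finV finite_subset by auto
    have AB: "A \<inter> B = {}" using nw unfolding A_def B_def by (auto simp: insert_commute)
    have uA: "u \<notin> A" and vB: "v \<notin> B" using eV[of u u] eV[of v v] unfolding A_def B_def by auto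
    have vA: "v \<notin> A" and uB: "u \<notin> B" using uvE unfolding A_def B_def by (auto simp: insert_commute)
    have dA: "degree E u = card A" and dB: "degree E v = card B"
      unfolding degree_def A_def B_def by auto
    have deg: "card A + card B \<ge> card V - 2" using dc[rule_format, OF uV vV] uv uvE dA dB by simp
    have sub: "A \<union> B \<subseteq> V - {u,v}" using AV BV uA vB vA uB by auto
    have cVuv: "card (V - {u,v}) = card V - 2" using uV vV uv finV by (simp add: card_Diff_subset)
    have cUn: "card (A \<union> B) = card A + card B" using finA finB AB card_Un_disjoint by blast
    have ABeq: "A \<union> B = V - {u,v}"
    proof (rule card_subset_eq)
      show "finite (V - {u,v})" using finV by simp
      show "A \<union> B \<subseteq> V - {u,v}" by (rule sub)
      have "card (A \<union> B) \<le> card (V - {u,v})" using sub finV by (simp add: card_mono)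
      then show "card (A \<union> B) = card (V - {u,v})" using cUn cVuv deg by linarith
    qed
    have sumAB: "card A + card B = card V - 2" using ABeq cUn cVuv by simp
    obtain p where p: "is_path V E p" "hd p = u" "last p = v" using cg uV vV
      unfolding connected_graph_def by blast
    obtain x y where xS: "x \<in> insert u A" and yS: "y \<notin> insert u A" and xyE: "{x,y} \<in> E"
      using crossing[OF p(1), of "insert u A"] p(2,3) vA uv by auto
    have xA: "x \<in> A"
    proof (rule ccontr)
      assume "x \<notin> A" then have "x = u" using xS by simp
      then show False using yS xyE unfolding A_def by simp
    qed
    have yB: "y \<in> B"
    proof -
      have "y \<in> V" using eV xyE by blast
      moreover have "y \<noteq> v"
      proof
        assume "y = v" then have "x \<in> B" using xyE unfolding B_def by (simp add: insert_commute)
        then show False using xA AB by blast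
      qed
      ultimately show ?thesis using ABeq yS by blast
    qed
    have EA: "{u,a} \<in> E" if "a \<in> A" for a using that unfolding A_def by simp
    have EB: "{b,v} \<in> E" if "b \<in> B" for b using that unfolding B_def by (simp add: insert_commute)
    have P1: "c {u,a} = c {b,v}" if a: "a \<in> A" and b: "b \<in> B" and ab: "{a,b} \<in> E" for a b
    proof (rule ccontr)
      assume ne: "c {u,a} \<noteq> c {b,v}"
      have d: "u \<noteq> a" "u \<noteq> b" "a \<noteq> b" "a \<noteq> v" "b \<noteq> v"
        using a b uA uB vA vB AB ab eV by auto
      have c1: "c {u,a} \<noteq> c {a,b}" using col[OF EA[OF a] ab] d by (auto simp: doubleton_eq_iff)
      have c2: "c {a,b} \<noteq> c {b,v}" using col[OF ab EB[OF b]] d by (auto simp: doubleton_eq_iff)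
      have "rainbow_path V E c [u,a,b,v]"
        using d c1 c2 ne uv EA[OF a] EB[OF b] ab eV by (simp add: rp; metis)
      then show False using nr by force
    qed
    have P2: "c {u,a} = c {x,y}" if a: "a \<in> A" and ax: "{a,x} \<in> E" for a
    proof (rule ccontr)
      assume ne: "c {u,a} \<noteq> c {x,y}"
      have d: "u \<noteq> a" "u \<noteq> x" "u \<noteq> y" "a \<noteq> x" "a \<noteq> y" "x \<noteq> y" "a \<noteq> v" "x \<noteq> v" "y \<noteq> v"
        using a xA yB uA uB vA vB AB ax xyE eV by auto
      have c1: "c {u,a} \<noteq> c {a,x}" using col[OF EA[OF a] ax] d by (auto simp: doubleton_eq_iff)
      have c2: "c {u,a} \<noteq> c {y,v}"
        using col[OF EA[OF a] EA[OF xA]] d P1[OF xA yB xyE] by (auto simp: doubleton_eq_iff)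
      have c3: "c {a,x} \<noteq> c {x,y}" using col[OF ax xyE] d by (auto simp: doubleton_eq_iff)
      have c4: "c {a,x} \<noteq> c {y,v}"
        using col[OF ax EA[OF xA]] d P1[OF xA yB xyE] by (auto simp: doubleton_eq_iff)
      have c5: "c {x,y} \<noteq> c {y,v}" using col[OF xyE EB[OF yB]] d by (auto simp: doubleton_eq_iff)
      have "rainbow_path V E c [u,a,x,y,v]"
        using d c1 c2 c3 c4 c5 ne uv EA[OF a] EB[OF yB] ax xyE eV by (simp add: rp; metis)
      then show False using nr by force
    qed
    have P3: "c {b,v} = c {x,y}" if b: "b \<in> B" and yb: "{y,b} \<in> E" for b
    proof (rule ccontr)
      assume ne: "c {b,v} \<noteq> c {x,y}"
      have d: "u \<noteq> b" "u \<noteq> x" "u \<noteq> y" "b \<noteq> x" "b \<noteq> y" "x \<noteq> y" "b \<noteq> v" "x \<noteq> v" "y \<noteq> v"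
        using b xA yB uA uB vA vB AB yb xyE eV by auto
      have c1: "c {u,x} \<noteq> c {y,b}"
        using col[OF yb EB[OF yB]] d P1[OF xA yB xyE] by (auto simp: doubleton_eq_iff)
      have c2: "c {u,x} \<noteq> c {b,v}"
        using col[OF EB[OF b] EB[OF yB]] d P1[OF xA yB xyE] by (auto simp: doubleton_eq_iff)
      have c3: "c {x,y} \<noteq> c {y,b}" using col[OF xyE yb] d by (auto simp: doubleton_eq_iff)
      have c4: "c {y,b} \<noteq> c {b,v}" using col[OF yb EB[OF b]] d by (auto simp: doubleton_eq_iff)
      have c5: "c {u,x} \<noteq> c {x,y}" using col[OF EA[OF xA] xyE] d by (auto simp: doubleton_eq_iff)
      have "rainbow_path V E c [u,x,y,b,v]"
        using d c1 c2 c3 c4 c5 ne uv EA[OF xA] EB[OF b] yb xyE eV by (simp add: rp; metis)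
      then show False using nr by force
    qed
    have NxB: "b = y" if "b \<in> B" "{x,b} \<in> E" for b
    proof (rule ccontr)
      assume "b \<noteq> y"
      have "c {b,v} = c {y,v}" using P1[OF xA that(1) that(2)] P1[OF xA yB xyE] by simp
      moreover have "c {b,v} \<noteq> c {y,v}" using col[OF EB[OF that(1)] EB[OF yB]] \<open>b \<noteq> y\<close>
        by (auto simp: doubleton_eq_iff)
      ultimately show False by simp
    qed
    have NyA: "a = x" if "a \<in> A" "{a,y} \<in> E" for a
    proof (rule ccontr)
      assume "a \<noteq> x"
      have "c {u,a} = c {u,x}" using P1[OF that(1) yB that(2)] P1[OF xA yB xyE] by simp
      moreover have "c {u,a} \<noteq> c {u,x}" using col[OF EA[OF that(1)] EA[OF xA]] \<open>a \<noteq> x\<close>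
        by (auto simp: doubleton_eq_iff)
      ultimately show False by simp
    qed
    define NA where "NA = {a \<in> A. {a,x} \<in> E}"
    define NB where "NB = {b \<in> B. {y,b} \<in> E}"
    have cNA: "card NA \<le> 1"
    proof -
      have "finite NA" using finA unfolding NA_def by simp
      moreover have "\<forall>a1\<in>NA. \<forall>a2\<in>NA. a1 = a2"
      proof (intro ballI, rule ccontr)
        fix a1 a2 assume h: "a1 \<in> NA" "a2 \<in> NA" "a1 \<noteq> a2"
        have "c {u,a1} = c {u,a2}" using h P2 unfolding NA_def by auto
        moreover have "a1 \<in> A" "a2 \<in> A" using h unfolding NA_def by auto
        moreover have "c {u,a1} \<noteq> c {u,a2}" using h(3) col[OF EA[OF \<open>a1 \<in> A\<close>] EA[OF \<open>a2 \<in> A\<close>]]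
          by (auto simp: doubleton_eq_iff)
        ultimately show False by simp
      qed
      ultimately show ?thesis using card_le_Suc0_iff_eq by (metis One_nat_def)
    qed
    have cNB: "card NB \<le> 1"
    proof -
      have "finite NB" using finB unfolding NB_def by simp
      moreover have "\<forall>a1\<in>NB. \<forall>a2\<in>NB. a1 = a2"
      proof (intro ballI, rule ccontr)
        fix a1 a2 assume h: "a1 \<in> NB" "a2 \<in> NB" "a1 \<noteq> a2"
        have "c {a1,v} = c {a2,v}" using h P3 unfolding NB_def by auto
        moreover have "a1 \<in> B" "a2 \<in> B" using h unfolding NB_def by auto
        moreover have "c {a1,v} \<noteq> c {a2,v}" using h(3) col[OF EB[OF \<open>a1 \<in> B\<close>] EB[OF \<open>a2 \<in> B\<close>]]
          by (auto simp: doubleton_eq_iff)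
        ultimately show False by simp
      qed
      ultimately show ?thesis using card_le_Suc0_iff_eq by (metis One_nat_def)
    qed
    have dx: "degree E x \<le> 3"
    proof -
      have "{w. {x,w} \<in> E} \<subseteq> {u} \<union> NA \<union> {y}"
      proof
        fix w assume "w \<in> {w. {x,w} \<in> E}"
        then have w: "{x,w} \<in> E" by simp
        then have "w \<in> V" "w \<noteq> x" using eV by auto
        moreover have "w \<noteq> v" using w xA AB unfolding B_def by (auto simp: insert_commute)
        ultimately consider "w = u" | "w \<in> A" | "w \<in> B" using ABeq by blast
        then show "w \<in> {u} \<union> NA \<union> {y}"
        proof cases
          case 2 then show ?thesis using w unfolding NA_def by (simp add: insert_commute)
        next
          case 3 then show ?thesis using NxB w by simp
        qed simp
      qed
      then have "degree E x \<le> card ({u} \<union> NA \<union> {y})"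
        unfolding degree_def using finA unfolding NA_def by (intro card_mono) auto
      also have "\<dots> \<le> card ({u} \<union> NA) + card {y}" by (rule card_Un_le)
      also have "\<dots> \<le> card {u} + card NA + card {y}" by (rule add_right_mono, rule card_Un_le)
      finally show ?thesis using cNA by simp
    qed
    have dy: "degree E y \<le> 3"
    proof -
      have "{w. {y,w} \<in> E} \<subseteq> {v} \<union> NB \<union> {x}"
      proof
        fix w assume "w \<in> {w. {y,w} \<in> E}"
        then have w: "{y,w} \<in> E" by simp
        then have "w \<in> V" "w \<noteq> y" using eV by auto
        moreover have "w \<noteq> u" using w yB AB unfolding A_def by (auto simp: insert_commute)
        ultimately consider "w = v" | "w \<in> A" | "w \<in> B" using ABeq by blast
        then show "w \<in> {v} \<union> NB \<union> {x}"
        proof cases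
          case 2 then show ?thesis using NyA w by (simp add: insert_commute)
        next
          case 3 then show ?thesis using w unfolding NB_def by simp
        qed simp
      qed
      then have "degree E y \<le> card ({v} \<union> NB \<union> {x})"
        unfolding degree_def using finB unfolding NB_def by (intro card_mono) auto
      also have "\<dots> \<le> card ({v} \<union> NB) + card {x}" by (rule card_Un_le)
      also have "\<dots> \<le> card {v} + card NB + card {x}" by (rule add_right_mono, rule card_Un_le)
      finally show ?thesis using cNB by simp
    qed
    have "x \<in> V" "y \<in> V" using xyE eV by auto
    have "x \<noteq> v" "{x,v} \<notin> E" using xA vA AB unfolding B_def by (auto simp: insert_commute)
    then have g1: "degree E x + card B \<ge> card V - 2" using dc[rule_format, OF \<open>x \<in> V\<close> vV] dB by simp
    have "u \<noteq> y" "{u,y} \<notin> E" using yB uB AB unfolding A_def by auto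
    then have g2: "card A + degree E y \<ge> card V - 2" using dc[rule_format, OF uV \<open>y \<in> V\<close>] dA by simp
    show False using g1 g2 dx dy sumAB n9 by linarith
  qed
qed

theorem proposition5p11:
  fixes V :: "'a set" and E :: "'a set set"
  assumes "simple_graph V E"
    and "connected_graph V E"
    and "card V \<ge> 9"
    and "\<forall>u\<in>V. \<forall>v\<in>V. u \<noteq> v \<and> {u, v} \<notin> E \<longrightarrow> degree E u + degree E v \<ge> card V - 2"
  shows "prc V E = chromatic_index V E"
proof -
  have "\<And>k. (\<exists>c. proper_edge_colouring E c k \<and> rainbow_connected V E c) \<longleftrightarrow> (\<exists>c. proper_edge_colouring E c k)"
    using every_proper_rc[OF assms] by blast
  then show ?thesis unfolding prc_def chromatic_index_def by simp
qed
end
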